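(* Let $\mathcal{C}$ be an $\mathbb{F}_q\mathcal{R}$-skew cyclic code of length $(\alpha,\beta)$, viewed inside $R_{\alpha,\beta}$, and let $N=\{k(x)\in\mathbb{F}_q[x;\Theta]/\langle x^\alpha-1\rangle : (k(x),0)\in\mathcal{C}\}$. Then $N$ is a left $\mathbb{F}_q[x;\Theta]$-submodule of $\mathbb{F}_q[x;\Theta]/\langle x^\alpha-1\rangle$ generated by a right divisor of $x^\alpha-1$.
   Context: Let $p$ be a prime, $q=p^m$, $\mathcal{R}=\mathbb{F}_q[u]/\langle u^2-u\rangle$. Fix $i$; $\Theta(a)=a^{p^i}$ on $\mathbb{F}_q$ and $\theta(a+ub)=a^{p^i}+ub^{p^i}$ on $\mathcal{R}$; $\eta(a+ub)=a$. $\mathbb{F}_q[x;\Theta]$, $\mathcal{R}[x;\theta]$ are skew polynomial rings with multiplication determined by $(ax^i)(bx^j)=a\Theta^i(b)x^{i+j}$ (resp. with $\theta$). $R_{\alpha,\beta}=\mathbb{F}_q[x;\Theta]/\langle x^\alpha-1\rangle\times\mathcal{R}[x;\theta]/\langle x^\beta-1\rangle$, identified with $\mathbb{F}_q^\alpha\times\mathcal{R}^\beta$ via coefficient vectors, is a left $\mathcal{R}[x;\theta]$-module via $r(x)*(k(x),t(x))=(\eta(r(x))k(x),r(x)t(x))$ ($\eta$ coefficientwise, reduction modulo $x^\alpha-1$, $x^\beta-1$). An $\mathbb{F}_q\mathcal{R}$-skew cyclic code of length $(\alpha,\beta)$ is an $\mathcal{R}$-submodule $\mathcal{C}$ of $\mathbb{F}_q^\alpha\times\mathcal{R}^\beta$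 (with $s*(x,y)=(\eta(s)x,sy)$ componentwise) closed under $\sigma(x_0,\dots,x_{\alpha-1},y_0,\dots,y_{\beta-1})=(\Theta(x_{\alpha-1}),\Theta(x_0),\dots,\Theta(x_{\alpha-2}),\theta(y_{\beta-1}),\theta(y_0),\dots,\theta(y_{\beta-2}))$; equivalently a left $\mathcal{R}[x;\theta]$-submodule of $R_{\alpha,\beta}$. *)

theory Defs
  imports "HOL-Computational_Algebra.Polynomial"
begin

definition Theta :: "nat \<Rightarrow> nat \<Rightarrow> 'a::field \<Rightarrow> 'a" where
  "Theta p i a = a ^ (p ^ i)"

(* R = F_q[u]/<u^2-u>, element a + u b represented as the pair (a,b) *)
definition R_add :: "'a::field \<times> 'a \<Rightarrow> 'a \<times> 'a \<Rightarrow> 'a \<times> 'a" where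
  "R_add s t = (fst s + fst t, snd s + snd t)"

definition R_mult :: "'a::field \<times> 'a \<Rightarrow> 'a \<times> 'a \<Rightarrow> 'a \<times> 'a" where
  "R_mult s t = (fst s * fst t, fst s * snd t + snd s * fst t + snd s * snd t)"

definition theta_R :: "nat \<Rightarrow> nat \<Rightarrow> 'a::field \<times> 'a \<Rightarrow> 'a \<times> 'a" where
  "theta_R p i s = (Theta p i (fst s), Theta p i (snd s))"

definition eta :: "'a::field \<times> 'a \<Rightarrow> 'a" where
  "eta s = fst s"

definition rshift :: "'b list \<Rightarrow> 'b list" where
  "rshift xs = (if xs = [] then [] else last xs # butlast xs)"

definition vadd :: "'a::field list \<times> ('a \<times> 'a) list \<Rightarrow> 'a list \<times> ('a \<times> 'a) list
                    \<Rightarrow> 'a list \<times> ('a \<times> 'a) list" where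
  "vadd c d = (map2 (+) (fst c) (fst d), map2 R_add (snd c) (snd d))"

definition smul :: "'a::field \<times> 'a \<Rightarrow> 'a list \<times> ('a \<times> 'a) list \<Rightarrow> 'a list \<times> ('a \<times> 'a) list" where
  "smul s c = (map (\<lambda>a. eta s * a) (fst c), map (R_mult s) (snd c))"

definition skew_sigma :: "nat \<Rightarrow> nat \<Rightarrow> 'a::field list \<times> ('a \<times> 'a) list \<Rightarrow> 'a list \<times> ('a \<times> 'a) list" where
  "skew_sigma p i c = (map (Theta p i) (rshift (fst c)), map (theta_R p i) (rshift (snd c)))"

definition FR_skew_cyclic_code ::
  "nat \<Rightarrow> nat \<Rightarrow> nat \<Rightarrow> nat \<Rightarrow> ('a::field list \<times> ('a \<times> 'a) list) set \<Rightarrow> bool" where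
  "FR_skew_cyclic_code p i \<alpha> \<beta> C \<longleftrightarrow>
     (\<forall>c\<in>C. length (fst c) = \<alpha> \<and> length (snd c) = \<beta>) \<and>
     (replicate \<alpha> 0, replicate \<beta> (0,0)) \<in> C \<and>
     (\<forall>c\<in>C. \<forall>d\<in>C. vadd c d \<in> C) \<and>
     (\<forall>s. \<forall>c\<in>C. smul s c \<in> C) \<and>
     (\<forall>c\<in>C. skew_sigma p i c \<in> C)"

definition skew_mult :: "('a::field \<Rightarrow> 'a) \<Rightarrow> 'a poly \<Rightarrow> 'a poly \<Rightarrow> 'a poly" where
  "skew_mult T f g = (\<Sum>i\<le>degree f. \<Sum>j\<le>degree g. monom (coeff f i * (T ^^ i) (coeff g j)) (i + j))"

definition skew_right_dvd :: "('a::field \<Rightarrow> 'a) \<Rightarrow> 'a poly \<Rightarrow> 'a poly \<Rightarrow> bool" where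
  "skew_right_dvd T g f \<longleftrightarrow> (\<exists>h. skew_mult T h g = f)"

(* canonical representative (degree < alpha) of f modulo the left ideal generated by x^alpha - 1 *)
definition cyc_red :: "nat \<Rightarrow> 'a::field poly \<Rightarrow> 'a poly" where
  "cyc_red \<alpha> f = (\<Sum>j\<le>degree f. monom (coeff f j) (j mod \<alpha>))"

(* left F_q[x;T]-submodule of F_q[x;T]/<x^alpha - 1>, elements represented by polys of degree < alpha *)
definition skew_left_submodule :: "('a::field \<Rightarrow> 'a) \<Rightarrow> nat \<Rightarrow> 'a poly set \<Rightarrow> bool" where
  "skew_left_submodule T \<alpha> S \<longleftrightarrow>
     (\<forall>s\<in>S. degree s < \<alpha>) \<and> 0 \<in> S \<and>
     (\<forall>s\<in>S. \<forall>t\<in>S. s + t \<in> S) \<and>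
     (\<forall>f. \<forall>s\<in>S. cyc_red \<alpha> (skew_mult T f s) \<in> S)"

end

theory Submission imports Defs "HOL-Number_Theory.Residues" begin
hide_const (open) up_ring.coeff up_ring.monom module.smult
lemma funpow_zero: fixes T :: "'a::zero \<Rightarrow> 'a" assumes "T 0 = 0" shows "(T ^^ k) 0 = 0"
  by (induction k) (simp_all add: assms)

lemma funpow_nz: fixes T :: "'a::zero \<Rightarrow> 'a" assumes nz: "\<And>x. T x = 0 \<Longrightarrow> x = 0" shows "(T ^^ k) x = 0 \<Longrightarrow> x = 0"
proof (induction k arbitrary: x)
  case (Suc k)
  then show ?case using nz[of "(T ^^ k) x"] by simp
qed simp

lemma skew_mult_eq:
  fixes T :: "'a::field \<Rightarrow> 'a"
  assumes T0: "T 0 = 0" and "degree f \<le> a" and "degree g \<le> b"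
  shows "skew_mult T f g = (\<Sum>i\<le>a. \<Sum>j\<le>b. monom (coeff f i * (T ^^ i) (coeff g j)) (i + j))"
proof -
  have inner: "(\<Sum>j\<le>degree g. monom (coeff f i * (T ^^ i) (coeff g j)) (i + j))
     = (\<Sum>j\<le>b. monom (coeff f i * (T ^^ i) (coeff g j)) (i + j))" for i
    by (rule sum.mono_neutral_left) (use assms in \<open>auto simp: coeff_eq_0 funpow_zero[where T=T, OF T0]\<close>)
  have "skew_mult T f g = (\<Sum>i\<le>degree f. \<Sum>j\<le>b. monom (coeff f i * (T ^^ i) (coeff g j)) (i + j))"
    unfolding skew_mult_def inner ..
  also have "\<dots> = (\<Sum>i\<le>a. \<Sum>j\<le>b. monom (coeff f i * (T ^^ i) (coeff g j)) (i + j))"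
    by (rule sum.mono_neutral_left) (use assms in \<open>auto simp: coeff_eq_0\<close>)
  finally show ?thesis .
qed

lemma skew_mult_add_left:
  fixes T :: "'a::field \<Rightarrow> 'a"
  assumes T0: "T 0 = 0"
  shows "skew_mult T (f1 + f2) g = skew_mult T f1 g + skew_mult T f2 g"
proof -
  let ?a = "max (degree f1) (degree f2)"
  have d: "degree (f1 + f2) \<le> ?a" by (simp add: degree_add_le)
  have e1: "skew_mult T f1 g = (\<Sum>i\<le>?a. \<Sum>j\<le>degree g. monom (coeff f1 i * (T ^^ i) (coeff g j)) (i + j))"
    by (rule skew_mult_eq[where T=T, OF T0]) auto
  have e2: "skew_mult T f2 g = (\<Sum>i\<le>?a. \<Sum>j\<le>degree g. monom (coeff f2 i * (T ^^ i) (coeff g j)) (i + j))"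
    by (rule skew_mult_eq[where T=T, OF T0]) auto
  show ?thesis
    unfolding skew_mult_eq[where T=T, OF T0 d order.refl] e1 e2
    by (simp add: sum.distrib[symmetric] add_monom distrib_right)
qed

lemma skew_mult_zero_left [simp]: "skew_mult (T::'a::field\<Rightarrow>'a) 0 g = 0"
  by (simp add: skew_mult_def)

lemma skew_mult_sum_left:
  fixes T :: "'a::field \<Rightarrow> 'a"
  assumes T0: "T 0 = 0"
  shows "skew_mult T (\<Sum>i\<in>A. h i) g = (\<Sum>i\<in>A. skew_mult T (h i) g)"
  by (induction A rule: infinite_finite_induct) (auto simp: skew_mult_add_left[where T=T, OF T0])

lemma skew_mult_monom:
  fixes T :: "'a::field \<Rightarrow> 'a"
  assumes T0: "T 0 = 0" and "degree g \<le> b"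
  shows "skew_mult T (monom c k) g = (\<Sum>j\<le>b. monom (c * (T ^^ k) (coeff g j)) (k + j))"
proof -
  have "skew_mult T (monom c k) g = (\<Sum>i\<le>k. \<Sum>j\<le>b. monom (coeff (monom c k) i * (T ^^ i) (coeff g j)) (i + j))"
    by (rule skew_mult_eq[where T=T, OF T0]) (use assms in \<open>auto simp: degree_monom_le\<close>)
  also have "\<dots> = (\<Sum>j\<le>b. monom (coeff (monom c k) k * (T ^^ k) (coeff g j)) (k + j))"
    by (subst sum.remove[of _ k]) (auto intro!: sum.neutral)
  finally show ?thesis by simp
qed

lemma coeff_skew_mult_monom:
  fixes T :: "'a::field \<Rightarrow> 'a"
  assumes T0: "T 0 = 0"
  shows "coeff (skew_mult T (monom c k) g) n = (if k \<le> n then c * (T ^^ k) (coeff g (n - k)) else 0)"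
proof -
  have "coeff (skew_mult T (monom c k) g) n = (\<Sum>j\<le>degree g. if k + j = n then c * (T ^^ k) (coeff g j) else 0)"
    unfolding skew_mult_monom[where T=T, OF T0 order.refl] coeff_sum coeff_monom by (rule sum.cong) auto
  also have "\<dots> = (\<Sum>j\<le>degree g. if j = n - k then (if k \<le> n then c * (T ^^ k) (coeff g j) else 0) else 0)"
    by (rule sum.cong) auto
  also have "\<dots> = (if k \<le> n then c * (T ^^ k) (coeff g (n - k)) else 0)"
    by (auto simp: coeff_eq_0 funpow_zero[where T=T, OF T0])
  finally show ?thesis .
qed


lemma cyc_red_eq:
  assumes "degree (h::'a::field poly) \<le> n"
  shows "cyc_red \<alpha> h = (\<Sum>j\<le>n. monom (coeff h j) (j mod \<alpha>))"
  unfolding cyc_red_def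
  by (rule sum.mono_neutral_left) (use assms in \<open>auto simp: coeff_eq_0\<close>)

lemma cyc_red_add: "cyc_red \<alpha> ((a::'a::field poly) + b) = cyc_red \<alpha> a + cyc_red \<alpha> b"
proof -
  let ?n = "max (degree a) (degree b)"
  have d: "degree (a + b) \<le> ?n" by (simp add: degree_add_le)
  have e1: "cyc_red \<alpha> a = (\<Sum>j\<le>?n. monom (coeff a j) (j mod \<alpha>))" by (rule cyc_red_eq) auto
  have e2: "cyc_red \<alpha> b = (\<Sum>j\<le>?n. monom (coeff b j) (j mod \<alpha>))" by (rule cyc_red_eq) auto
  show ?thesis
    unfolding cyc_red_eq[OF d] e1 e2
    by (simp add: sum.distrib[symmetric] add_monom)
qed

lemma cyc_red_zero [simp]: "cyc_red \<alpha> (0::'a::field poly) = 0"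
  by (simp add: cyc_red_def)

lemma cyc_red_neg: "cyc_red \<alpha> (- (a::'a::field poly)) = - cyc_red \<alpha> a"
proof -
  have "cyc_red \<alpha> a + cyc_red \<alpha> (-a) = 0" using cyc_red_add[of \<alpha> a "-a"] by simp
  from minus_unique[OF this] show ?thesis by simp
qed

lemma cyc_red_diff: "cyc_red \<alpha> ((a::'a::field poly) - b) = cyc_red \<alpha> a - cyc_red \<alpha> b"
  using cyc_red_add[of \<alpha> a "-b"] cyc_red_neg[of \<alpha> b] by simp

lemma cyc_red_sum: "cyc_red \<alpha> (\<Sum>i\<in>A. (h i::'a::field poly)) = (\<Sum>i\<in>A. cyc_red \<alpha> (h i))"
  by (induction A rule: infinite_finite_induct) (auto simp: cyc_red_add)

lemma cyc_red_monom: "cyc_red \<alpha> (monom (c::'a::field) k) = monom c (k mod \<alpha>)"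
  unfolding cyc_red_eq[of "monom c k" k, OF degree_monom_le]
  by (subst sum.remove[of _ k]) (auto intro!: sum.neutral)

lemma cyc_red_small:
  assumes "degree (h::'a::field poly) < \<alpha>"
  shows "cyc_red \<alpha> h = h"
  unfolding cyc_red_def
  by (subst (2) poly_as_sum_of_monoms[symmetric]) (rule sum.cong, use assms in auto)

lemma cyc_red_xa:
  assumes "0 < \<alpha>"
  shows "cyc_red \<alpha> (monom (1::'a::field) \<alpha> - 1) = 0"
  using assms by (simp add: cyc_red_diff cyc_red_monom cyc_red_small)

lemma skew_div:
  fixes T :: "'a::field \<Rightarrow> 'a"
  assumes T0: "T 0 = 0" and Tnz: "\<And>x. T x = 0 \<Longrightarrow> x = 0" and g: "g \<noteq> 0"
  shows "\<forall>s. (\<forall>i\<ge>n. coeff s i = 0) \<longrightarrow> (\<exists>q r. s = skew_mult T q g + r \<and> (\<forall>i\<ge>degree g. coeff r i = 0))"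
proof (induction n)
  case 0
  then show ?case by (intro allI impI exI[of _ 0]) (auto intro: poly_eqI)
next
  case (Suc m)
  show ?case
  proof (intro allI impI)
    fix s :: "'a poly"
    assume s: "\<forall>i\<ge>Suc m. coeff s i = 0"
    show "\<exists>q r. s = skew_mult T q g + r \<and> (\<forall>i\<ge>degree g. coeff r i = 0)"
    proof (cases "m < degree g")
      case True
      then show ?thesis using s by (intro exI[of _ 0] exI[of _ s]) auto
    next
      case False
      define k where "k = m - degree g"
      have lk: "(T ^^ k) (lead_coeff g) \<noteq> 0"
        using funpow_nz[of T k "lead_coeff g"] Tnz g by auto
      define c where "c = coeff s m / (T ^^ k) (lead_coeff g)"
      define s' where "s' = s - skew_mult T (monom c k) g"
      have "\<forall>i\<ge>m. coeff s' i = 0"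
      proof (intro allI impI)
        fix i assume im: "m \<le> i"
        show "coeff s' i = 0"
        proof (cases "i = m")
          case True
          then show ?thesis using False lk
            by (simp add: s'_def coeff_skew_mult_monom[where T=T, OF T0] k_def c_def)
        next
          case ne: False
          then have "i - k > degree g" using im False k_def by auto
          then show ?thesis using ne im s
            by (simp add: s'_def coeff_skew_mult_monom[where T=T, OF T0] k_def coeff_eq_0 funpow_zero[where T=T, OF T0])
        qed
      qed
      then obtain q r where qr: "s' = skew_mult T q g + r" "\<forall>i\<ge>degree g. coeff r i = 0"
        using Suc.IH by blast
      have "s = skew_mult T (monom c k + q) g + r"
        using qr(1) unfolding s'_def skew_mult_add_left[where T=T, OF T0] by (simp add: algebra_simps)
      then show ?thesis using qr(2) by blast
    qed
  qed
qed

lemma skew_division: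
  fixes T :: "'a::field \<Rightarrow> 'a"
  assumes T0: "T 0 = 0" and Tnz: "\<And>x. T x = 0 \<Longrightarrow> x = 0" and g: "g \<noteq> 0"
  shows "\<exists>q r. s = skew_mult T q g + r \<and> degree r < degree g \<or> s = skew_mult T q g + r \<and> r = 0"
proof -
  have "\<forall>i\<ge>Suc (degree s). coeff s i = 0" by (auto simp: coeff_eq_0)
  then obtain q r where qr: "s = skew_mult T q g + r" "\<forall>i\<ge>degree g. coeff r i = 0"
    using skew_div[where T=T, OF T0 Tnz g, of "Suc (degree s)"] by blast
  have "r = 0 \<or> degree r < degree g"
  proof (cases "r = 0")
    case False
    then have "coeff r (degree r) \<noteq> 0" by simp
    then show ?thesis using qr(2) by (meson not_le)
  qed simp
  then show ?thesis using qr(1) by blast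
qed



definition ix :: "nat \<Rightarrow> nat \<Rightarrow> nat \<Rightarrow> nat" where
  "ix \<alpha> k e = nat ((int e - int k) mod int \<alpha>)"

lemma ix_lt: "0 < \<alpha> \<Longrightarrow> ix \<alpha> k e < \<alpha>"
  unfolding ix_def by (simp add: nat_less_iff)

lemma ix_iff:
  assumes "0 < \<alpha>" "j < \<alpha>" "e < \<alpha>"
  shows "(k + j) mod \<alpha> = e \<longleftrightarrow> j = ix \<alpha> k e"
proof -
  have "(k + j) mod \<alpha> = e \<longleftrightarrow> int ((k + j) mod \<alpha>) = int e" by (rule of_nat_eq_iff[symmetric])
  also have "\<dots> \<longleftrightarrow> (int k + int j) mod int \<alpha> = int e mod int \<alpha>"
    using assms by (simp add: of_nat_mod)
  also have "\<dots> \<longleftrightarrow> int \<alpha> dvd (int k + int j - int e)"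
    by (rule mod_eq_dvd_iff)
  also have "\<dots> \<longleftrightarrow> int \<alpha> dvd (int j - (int e - int k))"
    by (simp add: algebra_simps)
  also have "\<dots> \<longleftrightarrow> int j mod int \<alpha> = (int e - int k) mod int \<alpha>"
    by (rule mod_eq_dvd_iff[symmetric])
  also have "\<dots> \<longleftrightarrow> int j = (int e - int k) mod int \<alpha>"
    using assms by simp
  also have "\<dots> \<longleftrightarrow> j = ix \<alpha> k e"
    unfolding ix_def using assms by auto
  finally show ?thesis .
qed

lemma ix_0: assumes "e < \<alpha>" shows "ix \<alpha> 0 e = e"
proof -
  have "int e mod int \<alpha> = int e" using assms by (intro mod_pos_pos_trivial) auto
  then show ?thesis unfolding ix_def by simp
qed

lemma ix_Suc: "ix \<alpha> (Suc k) (Suc e) = ix \<alpha> k e"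
proof -
  have "int (Suc e) - int (Suc k) = int e - int k" by simp
  then show ?thesis unfolding ix_def by (simp only:)
qed

lemma ix_Suc0: "ix (Suc a) (Suc k) 0 = ix (Suc a) k a"
proof -
  have eq: "int a - int k = (- int (Suc k)) + int (Suc a)" by simp
  have "ix (Suc a) k a = nat (((- int (Suc k)) + int (Suc a)) mod int (Suc a))"
    unfolding ix_def eq ..
  also have "\<dots> = nat ((- int (Suc k)) mod int (Suc a))"
    by (simp only: mod_add_self2)
  also have "\<dots> = ix (Suc a) (Suc k) 0"
    unfolding ix_def by simp
  finally show ?thesis by simp
qed

lemma neg1_pow:
  assumes "prime p" "card (UNIV :: 'a::{field,finite} set) = p ^ m"
  shows "(-1::'a) ^ (p ^ i) = -1"
proof (cases "odd (p ^ i)")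
  case True then show ?thesis by simp
next
  case False
  then have "even p" by simp
  then have p2: "p = 2" using assms(1) by (metis prime_nat_iff two_is_prime_nat dvd_def primes_dvd_imp_eq)
  have "CHAR('a) > 0" by (simp add: finite_imp_CHAR_pos)
  then have pc: "prime CHAR('a)" by (rule prime_CHAR_semidom)
  have "CHAR('a) dvd 2 ^ m" using CHAR_dvd_CARD[where 'a='a] assms(2) p2 by simp
  then have "CHAR('a) dvd 2" using pc prime_dvd_power by blast
  then have "CHAR('a) = 2" using pc by (simp add: primes_dvd_imp_eq)
  then have "(-1::'a) = 1" by (rule uminus_CHAR_2)
  then show ?thesis by (metis power_one)
qed



lemma Theta_0: "0 < p \<Longrightarrow> Theta p i (0::'a::field) = 0"
  by (simp add: Theta_def)

lemma Theta_nz: "Theta p i (x::'a::field) = 0 \<Longrightarrow> x = 0"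
  by (simp add: Theta_def)

lemma funpow_fix: "T x = x \<Longrightarrow> (T ^^ k) x = x"
  by (induction k) auto

lemma replicate_map2: "map2 f (replicate n x) (replicate n y) = replicate n (f x y)"
  by (induction n) auto

lemma rshift_replicate: "rshift (replicate n x) = replicate n x"
  by (cases n) (auto simp: rshift_def replicate_append_same[symmetric] butlast_append)

lemma Poly_map2_add:
  assumes "length xs = length ys"
  shows "Poly (map2 (+) xs ys) = Poly xs + (Poly ys :: 'a::field poly)"
  by (rule poly_eqI) (use assms in \<open>auto simp: nth_default_def\<close>)

context
  fixes C :: "('a::{field,finite} list \<times> ('a \<times> 'a) list) set"
    and p i \<alpha> \<beta> :: nat
  assumes code: "FR_skew_cyclic_code p i \<alpha> \<beta> C"
    and a0: "0 < \<alpha>" and b0: "0 < \<beta>" and p0: "0 < p"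
begin

definition NN :: "'a poly set" where
  "NN = {Poly k | k. (k, replicate \<beta> (0,0)) \<in> C}"

lemma len: "c \<in> C \<Longrightarrow> length (fst c) = \<alpha> \<and> length (snd c) = \<beta>"
  using code unfolding FR_skew_cyclic_code_def by blast

lemma NN_E:
  assumes "h \<in> NN"
  obtains k where "h = Poly k" "(k, replicate \<beta> (0,0)) \<in> C" "length k = \<alpha>"
  using assms len unfolding NN_def by fastforce

lemma NN_I: "(k, replicate \<beta> (0,0)) \<in> C \<Longrightarrow> Poly k \<in> NN"
  unfolding NN_def by blast

lemma NN_deg: "h \<in> NN \<Longrightarrow> degree h < \<alpha>"
proof -
  assume "h \<in> NN"
  then obtain k where k: "h = Poly k" "length k = \<alpha>" by (auto elim: NN_E)
  have "degree h \<le> \<alpha> - 1"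
    by (rule degree_le) (use k in \<open>auto simp: nth_default_def\<close>)
  then show ?thesis using a0 by linarith
qed

lemma NN_zero: "0 \<in> NN"
proof -
  have "(replicate \<alpha> 0, replicate \<beta> (0,0)) \<in> C"
    using code unfolding FR_skew_cyclic_code_def by blast
  from NN_I[OF this] show ?thesis by simp
qed

lemma NN_add: "a \<in> NN \<Longrightarrow> b \<in> NN \<Longrightarrow> a + b \<in> NN"
proof -
  assume "a \<in> NN" "b \<in> NN"
  then obtain ka kb where ka: "a = Poly ka" "(ka, replicate \<beta> (0,0)) \<in> C" "length ka = \<alpha>"
    and kb: "b = Poly kb" "(kb, replicate \<beta> (0,0)) \<in> C" "length kb = \<alpha>"
    by (metis NN_E)
  have "vadd (ka, replicate \<beta> (0,0)) (kb, replicate \<beta> (0,0)) \<in> C"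
    using code ka kb unfolding FR_skew_cyclic_code_def by blast
  then have "(map2 (+) ka kb, replicate \<beta> (0,0)) \<in> C"
    by (simp add: vadd_def replicate_map2 R_add_def)
  from NN_I[OF this] show ?thesis using ka kb by (simp add: Poly_map2_add)
qed

lemma NN_smult: "a \<in> NN \<Longrightarrow> smult c a \<in> NN"
proof -
  assume "a \<in> NN"
  then obtain ka where ka: "a = Poly ka" "(ka, replicate \<beta> (0,0)) \<in> C"
    by (metis NN_E)
  have "smul (c, 0) (ka, replicate \<beta> (0,0)) \<in> C"
    using code ka unfolding FR_skew_cyclic_code_def by blast
  then have "(map ((*) c) ka, replicate \<beta> (0,0)) \<in> C"
    by (simp add: smul_def R_mult_def eta_def)
  from NN_I[OF this] show ?thesis using ka by (simp add: smult_Poly)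
qed

lemma NN_neg: "a \<in> NN \<Longrightarrow> - a \<in> NN"
  using NN_smult[of a "-1"] by simp

lemma NN_sum: "(\<And>j. j \<in> A \<Longrightarrow> h j \<in> NN) \<Longrightarrow> (\<Sum>j\<in>A. h j) \<in> NN"
  by (induction A rule: infinite_finite_induct) (auto simp: NN_zero NN_add)

lemma NN_sigma: "(k, replicate \<beta> (0,0)) \<in> C \<Longrightarrow> (map (Theta p i) (rshift k), replicate \<beta> (0,0)) \<in> C"
proof -
  assume "(k, replicate \<beta> (0,0)) \<in> C"
  then have "skew_sigma p i (k, replicate \<beta> (0,0)) \<in> C"
    using code unfolding FR_skew_cyclic_code_def by blast
  then show ?thesis
    by (simp add: skew_sigma_def rshift_replicate theta_R_def Theta_0[OF p0])
qed

lemma NN_monom: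
  assumes s: "s \<in> NN"
  shows "cyc_red \<alpha> (skew_mult (Theta p i) (monom c k) s) \<in> NN"
proof -
  let ?T = "Theta p i"
  have T0: "?T 0 = 0" by (rule Theta_0[OF p0])
  obtain ks where ks: "s = Poly ks" "(ks, replicate \<beta> (0,0)) \<in> C" "length ks = \<alpha>"
    using s by (metis NN_E)
  define vk where "vk k = map (\<lambda>e. (?T ^^ k) (ks ! ix \<alpha> k e)) [0..<\<alpha>]" for k
  have vkC: "(vk k, replicate \<beta> (0,0)) \<in> C" for k
  proof (induction k)
    case 0
    have "vk 0 = ks" unfolding vk_def by (rule nth_equalityI) (auto simp: ks(3) ix_0)
    then show ?case using ks by simp
  next
    case (Suc k)
    obtain a where a: "\<alpha> = Suc a" using a0 by (cases \<alpha>) auto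
    have "map ?T (rshift (vk k)) = vk (Suc k)"
    proof (rule nth_equalityI)
      show "length (map ?T (rshift (vk k))) = length (vk (Suc k))"
        using a0 by (simp add: vk_def rshift_def)
    next
      fix e assume "e < length (map ?T (rshift (vk k)))"
      then have e: "e < Suc a" using a by (simp add: vk_def rshift_def)
      show "map ?T (rshift (vk k)) ! e = vk (Suc k) ! e"
      proof (cases e)
        case 0
        then show ?thesis using a
          by (simp add: vk_def rshift_def last_conv_nth ix_Suc0 del: upt_Suc)
      next
        case (Suc e')
        then show ?thesis using a e
          by (simp add: vk_def rshift_def nth_butlast ix_Suc del: upt_Suc)
      qed
    qed
    then show ?case using NN_sigma[OF Suc.IH] by simp
  qed
  have dks: "degree s \<le> \<alpha> - 1" using NN_deg[OF s] by simp
  have "cyc_red \<alpha> (skew_mult ?T (monom c k) s) = (\<Sum>j\<le>\<alpha>-1. monom (c * (?T ^^ k) (coeff s j)) ((k + j) mod \<alpha>))"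
    unfolding skew_mult_monom[where T="?T", OF T0 dks] cyc_red_sum cyc_red_monom ..
  also have "\<dots> = smult c (Poly (vk k))"
  proof (rule poly_eqI)
    fix e
    have "coeff (\<Sum>j\<le>\<alpha>-1. monom (c * (?T ^^ k) (coeff s j)) ((k + j) mod \<alpha>)) e
        = (\<Sum>j\<le>\<alpha>-1. if (k + j) mod \<alpha> = e then c * (?T ^^ k) (coeff s j) else 0)"
      by (simp add: coeff_sum coeff_monom eq_commute)
    also have "\<dots> = coeff (smult c (Poly (vk k))) e"
    proof (cases "e < \<alpha>")
      case True
      have "(\<Sum>j\<le>\<alpha>-1. if (k + j) mod \<alpha> = e then c * (?T ^^ k) (coeff s j) else 0)
          = (\<Sum>j\<le>\<alpha>-1. if j = ix \<alpha> k e then c * (?T ^^ k) (coeff s j) else 0)"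
        by (rule sum.cong) (use a0 True ix_iff in auto)
      also have "\<dots> = c * (?T ^^ k) (coeff s (ix \<alpha> k e))"
        using ix_lt[OF a0, of k e] by simp
      also have "\<dots> = coeff (smult c (Poly (vk k))) e"
        using True ix_lt[OF a0, of k e] ks(3) by (simp add: vk_def nth_default_def ks(1))
      finally show ?thesis .
    next
      case False
      then have "(\<Sum>j\<le>\<alpha>-1. if (k + j) mod \<alpha> = e then c * (?T ^^ k) (coeff s j) else 0) = 0"
        using a0 by (intro sum.neutral) (auto dest: sym)
      then show ?thesis using False by (simp add: vk_def nth_default_def)
    qed
    finally show "coeff (\<Sum>j\<le>\<alpha>-1. monom (c * (?T ^^ k) (coeff s j)) ((k + j) mod \<alpha>)) e
        = coeff (smult c (Poly (vk k))) e" .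
  qed
  finally show ?thesis using NN_smult[OF NN_I[OF vkC]] by simp
qed

lemma NN_mult:
  assumes s: "s \<in> NN"
  shows "cyc_red \<alpha> (skew_mult (Theta p i) f s) \<in> NN"
proof -
  have T0: "Theta p i 0 = (0::'a)" by (rule Theta_0[OF p0])
  have "skew_mult (Theta p i) f s = skew_mult (Theta p i) (\<Sum>j\<le>degree f. monom (coeff f j) j) s"
    by (simp add: poly_as_sum_of_monoms)
  also have "\<dots> = (\<Sum>j\<le>degree f. skew_mult (Theta p i) (monom (coeff f j) j) s)"
    by (rule skew_mult_sum_left[where T="Theta p i", OF T0])
  finally show ?thesis
    by (simp add: cyc_red_sum NN_sum NN_monom[OF s])
qed

end





lemma skew_mult_xa:
  fixes T :: "'a::field \<Rightarrow> 'a"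
  assumes T0: "T 0 = 0" and T1: "\<And>k. (T ^^ k) 1 = 1" and Tm1: "\<And>k. (T ^^ k) (-1) = -1"
    and a0: "0 < \<alpha>"
  shows "skew_mult T (monom c k) (monom 1 \<alpha> - 1) = monom c (k + \<alpha>) - monom c k"
proof (rule poly_eqI)
  fix n
  show "coeff (skew_mult T (monom c k) (monom 1 \<alpha> - 1)) n = coeff (monom c (k + \<alpha>) - monom c k) n"
    unfolding coeff_skew_mult_monom[where T=T, OF T0]
    using a0 by (auto simp: coeff_monom T1 Tm1 funpow_zero[where T=T, OF T0])
qed

lemma cyc_red_xa_mult:
  fixes T :: "'a::field \<Rightarrow> 'a"
  assumes T0: "T 0 = 0" and T1: "\<And>k. (T ^^ k) 1 = 1" and Tm1: "\<And>k. (T ^^ k) (-1) = -1"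
    and a0: "0 < \<alpha>"
  shows "cyc_red \<alpha> (skew_mult T f (monom 1 \<alpha> - 1)) = 0"
proof -
  have "skew_mult T f (monom 1 \<alpha> - 1) = skew_mult T (\<Sum>j\<le>degree f. monom (coeff f j) j) (monom 1 \<alpha> - 1)"
    by (simp add: poly_as_sum_of_monoms)
  also have "\<dots> = (\<Sum>j\<le>degree f. skew_mult T (monom (coeff f j) j) (monom 1 \<alpha> - 1))"
    by (rule skew_mult_sum_left[where T=T, OF T0])
  finally show ?thesis
    by (simp add: cyc_red_sum skew_mult_xa[where T=T, OF T0 T1 Tm1 a0] cyc_red_diff cyc_red_monom)
qed

theorem lemma1:
  fixes C :: "('a::{field,finite} list \<times> ('a \<times> 'a) list) set"
    and p m i \<alpha> \<beta> :: nat
  assumes "prime p" and "card (UNIV :: 'a set) = p ^ m"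
    and "0 < \<alpha>" and "0 < \<beta>"
    and "FR_skew_cyclic_code p i \<alpha> \<beta> C"
  shows "let N = {Poly k | k. (k, replicate \<beta> (0,0)) \<in> C} in
           skew_left_submodule (Theta p i) \<alpha> N \<and>
           (\<exists>g. skew_right_dvd (Theta p i) g (monom 1 \<alpha> - 1) \<and>
                N = {cyc_red \<alpha> (skew_mult (Theta p i) f g) | f. True})"
proof -
  let ?T = "Theta p i :: 'a \<Rightarrow> 'a"
  have p0: "0 < p" using assms(1) prime_gt_0_nat by blast
  note ctx = assms(5) assms(3) assms(4) p0
  have T0: "?T 0 = 0" by (rule Theta_0[OF p0])
  have Tnz: "\<And>x. ?T x = 0 \<Longrightarrow> x = 0" by (rule Theta_nz)
  have Tk1: "(?T ^^ k) 1 = 1" for k by (rule funpow_fix) (simp add: Theta_def)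
  have Tkm1: "(?T ^^ k) (-1) = -1" for k
    by (rule funpow_fix) (simp add: Theta_def neg1_pow[OF assms(1) assms(2)])
  define N where "N = {Poly k | k. (k, replicate \<beta> (0,0)) \<in> C}"
  have Neq: "N = NN C \<beta>" unfolding N_def by (simp add: NN_def[OF ctx])
  have Ndeg: "\<And>s. s \<in> N \<Longrightarrow> degree s < \<alpha>" using NN_deg[OF ctx] Neq by blast
  have Nzero: "0 \<in> N" using NN_zero[OF ctx] Neq by blast
  have Nadd: "\<And>a b. a \<in> N \<Longrightarrow> b \<in> N \<Longrightarrow> a + b \<in> N" using NN_add[OF ctx] Neq by blast
  have Nneg: "\<And>a. a \<in> N \<Longrightarrow> - a \<in> N" using NN_neg[OF ctx] Neq by blast
  have Nmult: "\<And>f s. s \<in> N \<Longrightarrow> cyc_red \<alpha> (skew_mult ?T f s) \<in> N" using NN_mult[OF ctx] Neq by blast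
  have sub: "skew_left_submodule ?T \<alpha> N"
    unfolding skew_left_submodule_def using Ndeg Nzero Nadd Nmult by blast
  have gen: "\<exists>g. skew_right_dvd ?T g (monom 1 \<alpha> - 1) \<and> N = {cyc_red \<alpha> (skew_mult ?T f g) | f. True}"
  proof (cases "N = {0}")
    case True
    let ?g = "monom 1 \<alpha> - 1 :: 'a poly"
    have "skew_mult ?T (monom 1 0) ?g = ?g"
      by (rule poly_eqI) (simp only: coeff_skew_mult_monom[where T="?T", OF T0], simp)
    then have "skew_right_dvd ?T ?g ?g" unfolding skew_right_dvd_def by blast
    moreover have "N = {cyc_red \<alpha> (skew_mult ?T f ?g) | f. True}"
      using True cyc_red_xa_mult[where T="?T", OF T0 Tk1 Tkm1 assms(3)] by auto
    ultimately show ?thesis by blast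
  next
    case False
    then obtain h where h: "h \<in> N" "h \<noteq> 0" using Nzero by blast
    define d where "d = (LEAST d. \<exists>g\<in>N. g \<noteq> 0 \<and> degree g = d)"
    have "\<exists>g\<in>N. g \<noteq> 0 \<and> degree g = d"
      unfolding d_def by (rule LeastI[of _ "degree h"]) (use h in blast)
    then obtain g where g: "g \<in> N" "g \<noteq> 0" "degree g = d" by blast
    have gmin: "degree g \<le> degree h'" if "h' \<in> N" "h' \<noteq> 0" for h'
      unfolding g(3) d_def by (rule Least_le) (use that in blast)
    have R: "\<exists>q. s = skew_mult ?T q g" if cs: "cyc_red \<alpha> s \<in> N" for s
    proof -
      obtain q r where qr: "s = skew_mult ?T q g + r" and rd: "degree r < degree g \<or> r = 0"
        using skew_division[where T="?T", OF T0 Tnz g(2), of s] by blast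
      have "degree r < \<alpha>" using rd Ndeg[OF g(1)] assms(3) by auto
      then have cr: "cyc_red \<alpha> r = r" by (rule cyc_red_small)
      have "cyc_red \<alpha> s = cyc_red \<alpha> (skew_mult ?T q g) + r"
        using qr cr cyc_red_add by metis
      then have "r = cyc_red \<alpha> s + - cyc_red \<alpha> (skew_mult ?T q g)" by simp
      then have "r \<in> N" using cs Nadd Nneg Nmult[OF g(1)] by metis
      then have "r = 0" using gmin rd by force
      then show ?thesis using qr by auto
    qed
    have "skew_right_dvd ?T g (monom 1 \<alpha> - 1)"
      unfolding skew_right_dvd_def using R[of "monom 1 \<alpha> - 1"] cyc_red_xa[OF assms(3)] Nzero by metis
    moreover have "N = {cyc_red \<alpha> (skew_mult ?T f g) | f. True}"
    proof (intro equalityI subsetI)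
      fix s assume s: "s \<in> N"
      then have cs: "cyc_red \<alpha> s = s" using Ndeg cyc_red_small by blast
      then obtain q where "s = skew_mult ?T q g" using R s by metis
      then have "s = cyc_red \<alpha> (skew_mult ?T q g)" using cs by simp
      then show "s \<in> {cyc_red \<alpha> (skew_mult ?T f g) | f. True}" by blast
    next
      fix s assume "s \<in> {cyc_red \<alpha> (skew_mult ?T f g) | f. True}"
      then show "s \<in> N" using Nmult[OF g(1)] by blast
    qed
    ultimately show ?thesis by blast
  qed
  show ?thesis unfolding Let_def N_def[symmetric] using sub gen by blast
qed

end
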